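(* Assume $K(i,j)=\phi(i)\wedge\phi(j)$ with $\phi$ positive and increasing. Let $X_0,Y_0\in\ell^1_{\mathbb N}$ be nonzero with $\|X_0\|_1=\|Y_0\|_1$ and $$S_m(Y_0)\le S_m(X_0)\quad\text{for all } 1\le m\le\|X_0\|_1.$$ Then the stochastic min-driven coagulation processes started from $X_0$ and from $Y_0$ can be constructed on a common probability space so that $T^{X_0}_i\le T^{Y_0}_i$ for all $i\ge1$ and $T^{X_0}\le T^{Y_0}$. In particular, for every nonzero $X_0\in\ell^1_{\mathbb N}$, with $n=\|X_0\|_1$, the random variables $T^{X_0}_1$ and $T^{X_0}$ are stochastically dominated by $T_1^{n\mathbf e_1}$ and $T^{n\mathbf e_1}$ respectively. (On a common probability space: $T_1^{X_0}\le T_1^{n\mathbf e_1}$ and $T^{X_0}\le T^{n\mathbf e_1}$.)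
   Context: $\ell^1_{\mathbb N}$ is the set of summable sequences $X=(X_i)_{i\ge1}$ of nonnegative integers, with $\|X\|_1=\sum_iX_i$ (the number of particles). $\mathbf e_i$ are the canonical unit sequences, and $\ell_X=\min\{i:X_i>0\}$. The stochastic min-driven coagulation process $X(t)$ started from $X_0$ is the continuous-time Markov chain whose only transitions from state $X$ are: - to $X-\mathbf e_{\ell_X}-\mathbf e_j+\mathbf e_{\ell_X+j}$ at rate $K(\ell_X,j)X_j$ for $j>\ell_X$; - to $X-2\mathbf e_{\ell_X}+\mathbf e_{2\ell_X}$ at rate $K(\ell_X,\ell_X)(X_{\ell_X}-1)$. For $Z\in\ell^1_{\mathbb N}$ with $\|Z\|_1=n$, $(S_1(Z),\dots,S_n(Z))$ is the list of particle sizes sorted increasingly: size $s$ appears $Z_s$ times. $T^{X_0}=\inf\{t\ge0:\|X(t)\|_1=1\}$, and $T^{X_0}_i=\inf\{t>0:X_1(t)=\dots=X_i(t)=0\}$. *)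

theory Defs
  imports "HOL-Probability.Probability"
begin

text \<open>Elements of the space of summable nonnegative integer sequences (indexed from 1)
  are represented as functions nat => nat with value 0 at index 0 and finite support.\<close>

type_synonym state = "nat \<Rightarrow> nat"

definition l1N :: "state \<Rightarrow> bool" where
  "l1N X \<longleftrightarrow> X 0 = 0 \<and> finite {i. 0 < X i}"

definition npart :: "state \<Rightarrow> nat" where
  "npart X = sum X {i. 0 < X i}"

definition lX :: "state \<Rightarrow> nat" where
  "lX X = (LEAST i. 0 < X i)"

definition unitseq :: "nat \<Rightarrow> state" where
  "unitseq i = (\<lambda>k. if k = i then 1 else 0)"

text \<open>list of particle sizes sorted increasingly; S m Z is its m-th entry (1-based)\<close>
definition size_list :: "state \<Rightarrow> nat list" where
  "size_list Z = concat (map (\<lambda>s. replicate (Z s) s) (sorted_list_of_set {s. 0 < Z s}))"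

definition S :: "nat \<Rightarrow> state \<Rightarrow> nat" where
  "S m Z = size_list Z ! (m - 1)"

definition coal :: "state \<Rightarrow> nat \<Rightarrow> nat \<Rightarrow> state" where
  "coal X a b = (\<lambda>k. X k - (if k = a then 1 else 0) - (if k = b then 1 else 0)
                        + (if k = a + b then 1 else 0))"

definition Kphi :: "(nat \<Rightarrow> real) \<Rightarrow> nat \<Rightarrow> nat \<Rightarrow> real" where
  "Kphi \<phi> i j = min (\<phi> i) (\<phi> j)"

definition qrate :: "(nat \<Rightarrow> nat \<Rightarrow> real) \<Rightarrow> state \<Rightarrow> state \<Rightarrow> real" where
  "qrate K X Y =
     (\<Sum>j\<in>{j. lX X < j \<and> 0 < X j}. if Y = coal X (lX X) j then K (lX X) j * real (X j) else 0)
     + (if Y = coal X (lX X) (lX X) then K (lX X) (lX X) * (real (X (lX X)) - 1) else 0)"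

definition qtot :: "(nat \<Rightarrow> nat \<Rightarrow> real) \<Rightarrow> state \<Rightarrow> real" where
  "qtot K X =
     (\<Sum>j\<in>{j. lX X < j \<and> 0 < X j}. K (lX X) j * real (X j))
     + K (lX X) (lX X) * (real (X (lX X)) - 1)"

text \<open>Jump chain / holding time description of the process: Z k is the state after
  the k-th jump, H k the holding time in state Z k.  Since every jump removes one particle,
  a process started from X0 jumps exactly npart X0 - 1 times and is then absorbed.
  The joint law of (jump chain, holding times) of the continuous time Markov chain with
  rates qrate is characterised by the following finite-dimensional formulas.\<close>
definition mdc_law ::
  "(nat \<Rightarrow> nat \<Rightarrow> real) \<Rightarrow> state \<Rightarrow> 'w measure \<Rightarrow> ('w \<Rightarrow> nat \<Rightarrow> state) \<Rightarrow> ('w \<Rightarrow> nat \<Rightarrow> real) \<Rightarrow> bool"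
where
  "mdc_law K X0 \<mu> Z H \<longleftrightarrow>
     prob_space \<mu> \<and> (AE \<omega> in \<mu>. Z \<omega> 0 = X0) \<and>
     (\<forall>k zs t. k \<le> npart X0 - 1 \<longrightarrow> zs 0 = X0 \<longrightarrow> (\<forall>j. 0 \<le> t j) \<longrightarrow>
        {\<omega>\<in>space \<mu>. (\<forall>j\<in>{1..k}. Z \<omega> j = zs j) \<and> (\<forall>j<k. t j < H \<omega> j)} \<in> sets \<mu> \<and>
        measure \<mu> {\<omega>\<in>space \<mu>. (\<forall>j\<in>{1..k}. Z \<omega> j = zs j) \<and> (\<forall>j<k. t j < H \<omega> j)}
          = (\<Prod>j\<in>{1..k}. qrate K (zs (j - 1)) (zs j) / qtot K (zs (j - 1))
                             * exp (- qtot K (zs (j - 1)) * t (j - 1))))"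

type_synonym jh = "(nat \<Rightarrow> state) \<times> (nat \<Rightarrow> real)"

text \<open>the continuous-time path built from jump chain and holding times, n = number of particles\<close>
definition cpath :: "nat \<Rightarrow> jh \<Rightarrow> real \<Rightarrow> state" where
  "cpath n zh t = fst zh (card {j. j < n - 1 \<and> (\<Sum>i\<le>j. snd zh i) \<le> t})"

definition jhspace :: "jh measure" where
  "jhspace = (PiM UNIV (\<lambda>_::nat. count_space (UNIV :: state set)))
               \<Otimes>\<^sub>M (PiM UNIV (\<lambda>_::nat. (borel :: real measure)))"

text \<open>T_i = inf{t > 0 : X_1(t) = ... = X_i(t) = 0} and T = inf{t >= 0 : ||X(t)|| = 1}
  (extended reals, inf of the empty set is infinity)\<close>
definition Tsub :: "nat \<Rightarrow> (real \<Rightarrow> state) \<Rightarrow> ereal" where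
  "Tsub i P = Inf (ereal ` {t. 0 < t \<and> (\<forall>m\<in>{1..i}. P t m = 0)})"

definition Tabs :: "(real \<Rightarrow> state) \<Rightarrow> ereal" where
  "Tabs P = Inf (ereal ` {t. 0 \<le> t \<and> npart (P t) = 1})"

definition mdc_coupling ::
  "(nat \<Rightarrow> nat \<Rightarrow> real) \<Rightarrow> state \<Rightarrow> state \<Rightarrow> ((real \<Rightarrow> state) \<Rightarrow> (real \<Rightarrow> state) \<Rightarrow> bool) \<Rightarrow> bool"
where
  "mdc_coupling K X0 Y0 R \<longleftrightarrow>
     (\<exists>\<mu> :: (jh \<times> jh) measure.
        sets \<mu> = sets (jhspace \<Otimes>\<^sub>M jhspace) \<and>
        mdc_law K X0 \<mu> (\<lambda>\<omega>. fst (fst \<omega>)) (\<lambda>\<omega>. snd (fst \<omega>)) \<and>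
        mdc_law K Y0 \<mu> (\<lambda>\<omega>. fst (snd \<omega>)) (\<lambda>\<omega>. snd (snd \<omega>)) \<and>
        (AE \<omega> in \<mu>. R (cpath (npart X0) (fst \<omega>)) (cpath (npart Y0) (snd \<omega>))))"

end

theory Submission
  imports Defs
begin

definition Fc :: "state \<Rightarrow> nat \<Rightarrow> nat" where "Fc X c = sum X {..c}"

lemma npart_sum: "l1N X \<Longrightarrow> finite A \<Longrightarrow> {i. 0 < X i} \<subseteq> A \<Longrightarrow> npart X = sum X A"
  unfolding npart_def l1N_def by (intro sum.mono_neutral_left) auto

lemma size_list_len: "l1N X \<Longrightarrow> length (size_list X) = npart X"
  unfolding size_list_def npart_def l1N_def
  by (simp add: length_concat comp_def sum_list_distinct_conv_sum_set)

lemma filrep: "length (filter P (replicate n x)) = (if P x then n else 0)"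
  by (induction n) auto

lemma size_list_filt: "l1N X \<Longrightarrow> length (filter (\<lambda>x. x \<le> c) (size_list X)) = Fc X c"
proof -
  assume a: "l1N X"
  have "length (filter (\<lambda>x. x \<le> c) (size_list X)) = (\<Sum>s\<in>{s. 0 < X s}. if s \<le> c then X s else 0)"
    unfolding size_list_def using a unfolding l1N_def
    by (simp add: filter_concat length_concat comp_def sum_list_distinct_conv_sum_set filrep)
  also have "\<dots> = (\<Sum>s\<in>{s. 0 < X s} \<inter> {..c}. X s)"
    using a unfolding l1N_def by (simp add: sum.inter_restrict)
  also have "\<dots> = Fc X c" unfolding Fc_def
    by (intro sum.mono_neutral_left) auto
  finally show ?thesis .
qed

lemma sorted_concat_rep: "sorted xs \<Longrightarrow> sorted (concat (map (\<lambda>s. replicate (f s) s) (xs::nat list)))"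
proof (induction xs)
  case (Cons a xs)
  then show ?case by (auto simp: sorted_append)
qed simp

lemma size_list_sorted: "sorted (size_list X)"
  unfolding size_list_def by (intro sorted_concat_rep) simp

lemma sorted_nth_le: "sorted (L::nat list) \<Longrightarrow> i < length L \<Longrightarrow> (L!i \<le> c) = (i < length (filter (\<lambda>x. x\<le>c) L))"
proof (induction L arbitrary: i)
  case (Cons x xs)
  show ?case
  proof (cases i)
    case 0
    then show ?thesis using Cons.prems by (auto simp: filter_empty_conv)
  next
    case (Suc j)
    have h: "(xs ! j \<le> c) = (j < length (filter (\<lambda>x. x \<le> c) xs))"
      using Cons Suc by auto
    show ?thesis
    proof (cases "x \<le> c")
      case True then show ?thesis using Suc h by simp
    next
      case False
      have "filter (\<lambda>x. x \<le> c) xs = []" using Cons.prems False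
        by (auto simp: filter_empty_conv)
      moreover have "x \<le> xs ! j" using Cons.prems Suc by (auto simp: nth_mem)
      ultimately show ?thesis using Suc False by simp
    qed
  qed
qed simp

lemma S_le: "l1N X \<Longrightarrow> 1 \<le> p \<Longrightarrow> p \<le> npart X \<Longrightarrow> (S p X \<le> c) = (p \<le> Fc X c)"
  unfolding S_def
  using sorted_nth_le[OF size_list_sorted, of "p - 1" X c] size_list_len[of X] size_list_filt[of X c]
  by auto

lemma lX_in: "0 < X i \<Longrightarrow> 0 < X (lX X)"
  unfolding lX_def by (rule LeastI)

lemma lX_le: "0 < X i \<Longrightarrow> lX X \<le> i"
  unfolding lX_def by (rule Least_le)

lemma Fc_Suc: "Fc X (Suc c) = Fc X c + X (Suc c)"
  unfolding Fc_def by simp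

lemma Fc_pos: "(1 \<le> Fc X c) = (\<exists>u\<le>c. 0 < X u)"
proof -
  have "(sum X {..c} = 0) = (\<forall>u\<le>c. X u = 0)" by auto
  moreover have g: "\<And>n::nat. (1 \<le> n) = (n \<noteq> 0)" by auto
  ultimately show ?thesis unfolding Fc_def g by auto
qed

lemma Fc_pos_lX: "0 < X i \<Longrightarrow> (1 \<le> Fc X c) = (lX X \<le> c)"
  unfolding Fc_pos using lX_in[of X i] lX_le[of X] le_trans by blast

lemma Fc_0: "l1N X \<Longrightarrow> Fc X 0 = 0"
  unfolding Fc_def l1N_def by simp

lemma npart_pos: "l1N X \<Longrightarrow> 0 < X i \<Longrightarrow> 1 \<le> npart X"
proof -
  assume a: "l1N X" "0 < X i"
  have "X i \<le> npart X" unfolding npart_def using a unfolding l1N_def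
    by (intro member_le_sum) auto
  then show ?thesis using a by simp
qed

lemma npart_ex: "l1N X \<Longrightarrow> 1 \<le> npart X \<Longrightarrow> \<exists>i. 0 < X i"
  unfolding npart_def by (metis le_zero_eq one_neq_zero sum.neutral mem_Collect_eq)

lemma lX_ge1: "l1N X \<Longrightarrow> 0 < X i \<Longrightarrow> 1 \<le> lX X"
  using lX_in[of X i] unfolding l1N_def by (cases "lX X") auto

lemma S_eq: "l1N X \<Longrightarrow> 1 \<le> p \<Longrightarrow> p \<le> npart X \<Longrightarrow>
   (S p X = s) = (1 \<le> s \<and> Fc X (s - 1) < p \<and> p \<le> Fc X s)"
proof -
  assume a: "l1N X" "1 \<le> p" "p \<le> npart X"
  show ?thesis
  proof (cases s)
    case 0
    then show ?thesis using S_le[OF a, of 0] Fc_0[OF a(1)] a by auto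
  next
    case (Suc s')
    have "(S p X = s) = (S p X \<le> s \<and> \<not> S p X \<le> s')" using Suc by auto
    then show ?thesis using S_le[OF a, of s] S_le[OF a, of s'] Suc by auto
  qed
qed

lemma S_props: assumes a: "l1N X" "2 \<le> p" "p \<le> npart X" and s: "s = S p X"
  shows "0 < X s" "lX X \<le> s" "s = lX X \<Longrightarrow> 2 \<le> X s"
proof -
  have e: "1 \<le> s \<and> Fc X (s - 1) < p \<and> p \<le> Fc X s" using S_eq[OF a(1) _ a(3), of s] a(2) s by auto
  then obtain s' where s': "s = Suc s'" by (cases s) auto
  have F: "Fc X s = Fc X s' + X s" using Fc_Suc[of X s'] s' by simp
  show p: "0 < X s" using e F s' by auto
  show "lX X \<le> s" using lX_le[of X s, OF p] .
  assume "s = lX X"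
  hence "\<not> lX X \<le> s'" using s' by simp
  hence "Fc X s' = 0" using Fc_pos_lX[of X s s', OF p] by simp
  then show "2 \<le> X s" using e F s' a(2) by simp
qed

lemma coal_id: assumes "1 \<le> X l" "1 \<le> X s" "l = s \<Longrightarrow> 2 \<le> X l"
  shows "coal X l s u + (if u = l then 1 else 0) + (if u = s then 1 else 0) = X u + (if u = l + s then 1 else 0)"
  using assms unfolding coal_def by auto

lemma sum_ind: "finite A \<Longrightarrow> (\<Sum>u\<in>A. (if u = a then 1 else 0::nat)) = (if a \<in> A then 1 else 0)"
  by (simp add: sum.delta)

lemma coal_sum: assumes "1 \<le> X l" "1 \<le> X s" "l = s \<Longrightarrow> 2 \<le> X l" "finite A"
  shows "sum (coal X l s) A + (if l \<in> A then 1 else 0) + (if s \<in> A then 1 else 0)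
     = sum X A + (if l + s \<in> A then 1 else 0)"
proof -
  have "(\<Sum>u\<in>A. coal X l s u + (if u = l then 1 else 0) + (if u = s then 1 else 0))
      = (\<Sum>u\<in>A. X u + (if u = l + s then 1 else 0))"
    using coal_id[where X=X and l=l and s=s, OF assms(1-3)] by simp
  then show ?thesis using assms(4) by (simp add: sum.distrib sum_ind)
qed

definition stp :: "state \<Rightarrow> nat \<Rightarrow> state" where
  "stp X p = coal X (lX X) (S (max 2 (min p (npart X))) X)"

lemma stp_facts: assumes a: "l1N X" "2 \<le> npart X"
  shows "l1N (stp X p)" "npart (stp X p) = npart X - 1"
    "\<And>c. Fc (stp X p) c + (if lX X \<le> c then 1 else 0) + (if S (max 2 (min p (npart X))) X \<le> c then 1 else 0)
        = Fc X c + (if lX X + S (max 2 (min p (npart X))) X \<le> c then 1 else 0)"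
proof -
  define q where "q = max 2 (min p (npart X))"
  define s where "s = S q X"
  define l where "l = lX X"
  have q: "2 \<le> q" "q \<le> npart X" using a unfolding q_def by auto
  note sp = S_props[OF a(1) q s_def]
  have l1: "1 \<le> X l" "1 \<le> X s" "l = s \<Longrightarrow> 2 \<le> X l" using sp lX_in[of X s] unfolding l_def by auto
  have lge: "1 \<le> l" using lX_ge1[of X s, OF a(1) sp(1)] l_def by simp
  have st: "stp X p = coal X l s" unfolding stp_def q_def s_def l_def by simp
  have fin: "finite {i. 0 < X i}" using a(1) unfolding l1N_def by simp
  have s0: "s \<noteq> 0" using l1(2) a(1) unfolding l1N_def by (cases "s = 0") auto
  have c0: "coal X l s 0 = 0" using a(1) lge s0 unfolding coal_def l1N_def by auto
  have supp: "{i. 0 < coal X l s i} \<subseteq> {i. 0 < X i} \<union> {l + s}"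
    using s0 lge unfolding coal_def by auto
  have "finite {i. 0 < coal X l s i}" using finite_subset[OF supp] fin by auto
  then show lok: "l1N (stp X p)" unfolding st l1N_def using c0 by simp
  have "sum (coal X l s) ({i. 0 < X i} \<union> {l + s}) + 1 + 1 = sum X ({i. 0 < X i} \<union> {l + s}) + 1"
  proof -
    have m: "l \<in> {i. 0 < X i} \<union> {l + s}" "s \<in> {i. 0 < X i} \<union> {l + s}" "l + s \<in> {i. 0 < X i} \<union> {l + s}"
      using l1 by auto
    show ?thesis
      using coal_sum[where X=X and l=l and s=s and A="{i. 0 < X i} \<union> {l + s}", OF l1] fin m
      by (simp only: if_True finite_Un finite_insert finite.emptyI simp_thms)
  qed
  moreover have "npart (coal X l s) = sum (coal X l s) ({i. 0 < X i} \<union> {l + s})"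
    using npart_sum[of "coal X l s" "{i. 0 < X i} \<union> {l + s}"] lok supp fin unfolding st by simp
  moreover have "npart X = sum X ({i. 0 < X i} \<union> {l + s})"
    using npart_sum[OF a(1), of "{i. 0 < X i} \<union> {l + s}"] fin by (simp add: subset_insertI)
  ultimately show "npart (stp X p) = npart X - 1" using st by simp
  fix c
  show "Fc (stp X p) c + (if lX X \<le> c then 1 else 0) + (if S (max 2 (min p (npart X))) X \<le> c then 1 else 0)
        = Fc X c + (if lX X + S (max 2 (min p (npart X))) X \<le> c then 1 else 0)"
    using coal_sum[where X=X and l=l and s=s and A="{..c}", OF l1] unfolding Fc_def st q_def[symmetric] s_def[symmetric] l_def[symmetric]
    by simp
qed

definition Dom :: "state \<Rightarrow> state \<Rightarrow> bool" where
  "Dom Y X \<longleftrightarrow> (\<forall>c. Fc X c \<le> Fc Y c)"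

lemma stp_dom: assumes x: "l1N X" and y: "l1N Y" and n: "npart X = npart Y" "2 \<le> npart X"
  and d: "Dom Y X"
  shows "Dom (stp Y p) (stp X p)"
  unfolding Dom_def
proof
  fix c
  define q where "q = max 2 (min p (npart X))"
  have q: "2 \<le> q" "q \<le> npart X" "1 \<le> q" using n unfolding q_def by auto
  have qY: "q = max 2 (min p (npart Y))" using n q_def by simp
  obtain i where i: "0 < X i" using npart_ex[OF x] n by auto
  obtain j where j: "0 < Y j" using npart_ex[OF y] n by auto
  have FX: "Fc (stp X p) c + (if lX X \<le> c then 1 else 0) + (if S q X \<le> c then 1 else 0)
        = Fc X c + (if lX X + S q X \<le> c then 1 else 0)" using stp_facts(3)[OF x n(2)] q_def by simp
  have FY: "Fc (stp Y p) c + (if lX Y \<le> c then 1 else 0) + (if S q Y \<le> c then 1 else 0)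
        = Fc Y c + (if lX Y + S q Y \<le> c then 1 else 0)" using stp_facts(3)[OF y] n qY by simp
  have dd: "\<And>c. Fc X c \<le> Fc Y c" using d unfolding Dom_def by auto
  have lYX: "lX Y \<le> lX X"
    using Fc_pos_lX[of X i "lX X", OF i] Fc_pos_lX[of Y j "lX X", OF j] dd[of "lX X"] by simp
  have sYX: "S q Y \<le> S q X"
    using S_le[OF x q(3) q(2), of "S q X"] S_le[OF y q(3), of "S q X"] n q(2) dd[of "S q X"] by simp
  have e1: "(lX X \<le> c) = (1 \<le> Fc X c)" "(lX Y \<le> c) = (1 \<le> Fc Y c)"
    using Fc_pos_lX[of X i c, OF i] Fc_pos_lX[of Y j c, OF j] by auto
  have e2: "(S q X \<le> c) = (q \<le> Fc X c)" "(S q Y \<le> c) = (q \<le> Fc Y c)"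
    using S_le[OF x q(3) q(2)] S_le[OF y q(3)] q n by auto
  have e3: "lX X + S q X \<le> c \<Longrightarrow> lX Y + S q Y \<le> c" using lYX sYX by simp
  define a where "a = Fc X c"
  define b where "b = Fc Y c"
  have ab: "a \<le> b" using dd[of c] a_def b_def by simp
  have g: "a + (if q \<le> b then 1 else 0) + (if 1 \<le> b then 1 else 0)
     \<le> b + (if q \<le> a then 1 else 0) + (if 1 \<le> a then 1 else 0)"
    using ab q(1) by auto
  show "Fc (stp X p) c \<le> Fc (stp Y p) c"
  proof -
    have X': "Fc (stp X p) c + (if 1 \<le> a then 1 else 0) + (if q \<le> a then 1 else 0)
        = a + (if lX X + S q X \<le> c then 1 else 0)" using FX e1 e2 a_def by simp
    have Y': "Fc (stp Y p) c + (if 1 \<le> b then 1 else 0) + (if q \<le> b then 1 else 0)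
        = b + (if lX Y + S q Y \<le> c then 1 else 0)" using FY e1 e2 b_def by simp
    have "(if lX X + S q X \<le> c then 1 else 0) \<le> (if lX Y + S q Y \<le> c then 1 else (0::nat))"
      using e3 by auto
    then show ?thesis using X' Y' g by linarith
  qed
qed

lemma stp_zero: assumes x: "l1N X" "2 \<le> npart X" and z: "Fc X i = 0"
  shows "Fc (stp X p) i = 0"
proof -
  obtain j where j: "0 < X j" using npart_ex[OF x(1)] x by auto
  have "\<not> lX X \<le> i" using Fc_pos_lX[of X j i, OF j] z by simp
  then show ?thesis using stp_facts(3)[OF x, of p i] z by (auto split: if_splits)
qed

lemma Sdom_Dom: assumes x: "l1N X" and y: "l1N Y" and n: "npart X = npart Y"
  and h: "\<forall>m\<in>{1..npart X}. S m Y \<le> S m X"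
  shows "Dom Y X"
  unfolding Dom_def
proof
  fix c
  show "Fc X c \<le> Fc Y c"
  proof (cases "Fc X c = 0")
    case False
    define a where "a = Fc X c"
    have a1: "1 \<le> a" using False a_def by simp
    have an: "a \<le> npart X"
    proof -
      have "a = sum X ({..c} \<inter> {i. 0 < X i})" unfolding a_def Fc_def
        by (intro sum.mono_neutral_right) auto
      also have "\<dots> \<le> sum X {i. 0 < X i}" using x unfolding l1N_def by (intro sum_mono2) auto
      finally show ?thesis unfolding npart_def .
    qed
    have "S a X \<le> c" using S_le[OF x a1 an, of c] a_def by simp
    hence "S a Y \<le> c" using h a1 an by force
    then show ?thesis using S_le[OF y a1, of c] an n a_def by simp
  qed simp
qed

lemma Fc_le_npart: "l1N X \<Longrightarrow> Fc X c \<le> npart X"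
proof -
  assume x: "l1N X"
  have "Fc X c = sum X ({..c} \<inter> {i. 0 < X i})" unfolding Fc_def
    by (intro sum.mono_neutral_right) auto
  also have "\<dots> \<le> sum X {i. 0 < X i}" using x unfolding l1N_def by (intro sum_mono2) auto
  finally show ?thesis unfolding npart_def .
qed

lemma Kphi_eq: "mono_on {1..} \<phi> \<Longrightarrow> 1 \<le> l \<Longrightarrow> l \<le> j \<Longrightarrow> Kphi \<phi> l j = \<phi> l"
  unfolding Kphi_def by (auto simp: mono_on_def min_def)

lemma fiber_card: assumes x: "l1N X" "2 \<le> npart X"
  shows "card {p\<in>{2..npart X}. S p X = s} = X s - (if s = lX X then 1 else 0)"
proof -
  obtain i where i: "0 < X i" using npart_ex[OF x(1)] x(2) by auto
  have lge: "1 \<le> lX X" using lX_ge1[of X i, OF x(1) i] .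
  show ?thesis
  proof (cases s)
    case 0
    have "{p\<in>{2..npart X}. S p X = s} = {}" using S_eq[OF x(1), of _ s] 0 by auto
    then show ?thesis using 0 x(1) lge unfolding l1N_def by auto
  next
    case (Suc s')
    have FS: "Fc X s = Fc X s' + X s" using Fc_Suc[of X s'] Suc by simp
    have Fm: "Fc X s \<le> npart X" using Fc_le_npart[OF x(1)] .
    have "{p\<in>{2..npart X}. S p X = s} = {max 2 (Fc X s' + 1) .. Fc X s}"
      using S_eq[OF x(1), of _ s] Suc Fm by auto
    hence c: "card {p\<in>{2..npart X}. S p X = s} = Fc X s + 1 - max 2 (Fc X s' + 1)" by simp
    have e1: "(lX X \<le> s') = (1 \<le> Fc X s')" using Fc_pos_lX[of X i s', OF i] by simp
    have e2: "(lX X \<le> s) = (1 \<le> Fc X s)" using Fc_pos_lX[of X i s, OF i] by simp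
    have e3: "0 < X s \<Longrightarrow> lX X \<le> s" using lX_le[of X s] by simp
    have e4: "s = lX X \<Longrightarrow> 0 < X s" using lX_in[of X i, OF i] by simp
    show ?thesis
    proof (cases "lX X \<le> s'")
      case True
      then have "1 \<le> Fc X s'" "s \<noteq> lX X" using e1 Suc by auto
      then show ?thesis unfolding c FS by simp
    next
      case f1: False
      then have z: "Fc X s' = 0" using e1 by simp
      show ?thesis
      proof (cases "lX X \<le> s")
        case True
        then have "s = lX X" using f1 Suc by simp
        then show ?thesis unfolding c FS z by simp
      next
        case False
        then have "Fc X s = 0" using e2 by simp
        then have "X s = 0" using FS by simp
        moreover have "s \<noteq> lX X" using False by auto
        ultimately show ?thesis unfolding c FS z by simp
      qed
    qed
  qed
qed

lemma stp_clamp: "2 \<le> p \<Longrightarrow> p \<le> npart X \<Longrightarrow> stp X p = coal X (lX X) (S p X)"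
  unfolding stp_def by (simp add: max_def min_def)

lemma count_stp: assumes x: "l1N X" "2 \<le> npart X"
  shows "card {p\<in>{2..npart X}. stp X p = Y}
     = (\<Sum>s\<in>{i. 0 < X i}. if coal X (lX X) s = Y then X s - (if s = lX X then 1 else 0) else 0)"
proof -
  define P where "P = {2..npart X}"
  define A where "A s = {p\<in>P. S p X = s \<and> coal X (lX X) s = Y}" for s
  have fin: "finite {i. 0 < X i}" using x(1) unfolding l1N_def by simp
  have "{p\<in>P. stp X p = Y} = (\<Union>s\<in>{i. 0 < X i}. A s)"
  proof (intro equalityI subsetI)
    fix p assume p: "p \<in> {p\<in>P. stp X p = Y}"
    hence pp: "2 \<le> p" "p \<le> npart X" unfolding P_def by auto
    have "0 < X (S p X)" using S_props(1)[OF x(1) pp refl] .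
    then show "p \<in> (\<Union>s\<in>{i. 0 < X i}. A s)" using p stp_clamp[OF pp] unfolding A_def by auto
  next
    fix p assume "p \<in> (\<Union>s\<in>{i. 0 < X i}. A s)"
    then show "p \<in> {p\<in>P. stp X p = Y}" unfolding A_def P_def using stp_clamp by auto
  qed
  hence "card {p\<in>P. stp X p = Y} = card (\<Union>s\<in>{i. 0 < X i}. A s)" by simp
  also have "\<dots> = (\<Sum>s\<in>{i. 0 < X i}. card (A s))"
    by (rule card_UN_disjoint) (auto simp: fin A_def P_def)
  also have "\<dots> = (\<Sum>s\<in>{i. 0 < X i}. if coal X (lX X) s = Y then X s - (if s = lX X then 1 else 0) else 0)"
  proof (intro sum.cong refl)
    fix s
    show "card (A s) = (if coal X (lX X) s = Y then X s - (if s = lX X then 1 else 0) else 0)"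
      using fiber_card[OF x, of s] unfolding A_def P_def by auto
  qed
  finally show ?thesis unfolding P_def .
qed

lemma supp_split: assumes x: "l1N X" and i: "0 < X i"
  shows "(\<Sum>s\<in>{i. 0 < X i}. g s) = (\<Sum>j\<in>{j. lX X < j \<and> 0 < X j}. g j) + g (lX X)"
proof -
  have fin: "finite {i. 0 < X i}" using x unfolding l1N_def by simp
  have "{i. 0 < X i} = insert (lX X) {j. lX X < j \<and> 0 < X j}"
  proof (intro set_eqI iffI)
    fix x assume "x \<in> {i. 0 < X i}"
    then have "lX X \<le> x" "0 < X x" using lX_le[of X x] by auto
    then show "x \<in> insert (lX X) {j. lX X < j \<and> 0 < X j}" by auto
  next
    fix x assume "x \<in> insert (lX X) {j. lX X < j \<and> 0 < X j}"
    then show "x \<in> {i. 0 < X i}" using lX_in[of X i, OF i] by auto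
  qed
  moreover have "lX X \<notin> {j. lX X < j \<and> 0 < X j}" by simp
  moreover have "finite {j. lX X < j \<and> 0 < X j}" using fin by (rule finite_subset[rotated]) auto
  ultimately show ?thesis by (simp add: add.commute)
qed

lemma qrate_eq: assumes incr: "mono_on {1..} \<phi>" and x: "l1N X" "2 \<le> npart X"
  shows "qrate (Kphi \<phi>) X Y = \<phi> (lX X) * real (card {p\<in>{2..npart X}. stp X p = Y})"
    "qtot (Kphi \<phi>) X = \<phi> (lX X) * real (npart X - 1)"
proof -
  obtain i where i: "0 < X i" using npart_ex[OF x(1)] x(2) by auto
  define l where "l = lX X"
  have lge: "1 \<le> l" using lX_ge1[of X i, OF x(1) i] l_def by simp
  have Xl: "1 \<le> X l" using lX_in[of X i, OF i] l_def by simp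
  have K: "\<And>j. l \<le> j \<Longrightarrow> Kphi \<phi> l j = \<phi> l" using Kphi_eq[OF incr lge] .
  define g where "g s = (if coal X l s = Y then \<phi> l * real (X s - (if s = l then 1 else 0)) else 0)" for s
  have a: "(\<Sum>j\<in>{j. l < j \<and> 0 < X j}. (if Y = coal X l j then Kphi \<phi> l j * real (X j) else 0))
     = (\<Sum>j\<in>{j. l < j \<and> 0 < X j}. g j)"
  proof (rule sum.cong[OF refl])
    fix j assume "j \<in> {j. l < j \<and> 0 < X j}"
    then show "(if Y = coal X l j then Kphi \<phi> l j * real (X j) else 0) = g j"
      using K[of j] unfolding g_def by auto
  qed
  have b: "(if Y = coal X l l then Kphi \<phi> l l * (real (X l) - 1) else 0) = g l"
    using K[of l] Xl unfolding g_def by (simp add: of_nat_diff)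
  have "qrate (Kphi \<phi>) X Y = (\<Sum>j\<in>{j. l < j \<and> 0 < X j}. g j) + g l"
    unfolding qrate_def l_def[symmetric] a b ..
  also have "\<dots> = (\<Sum>s\<in>{i. 0 < X i}. g s)" unfolding l_def by (rule supp_split[OF x(1) i, symmetric])
  also have "\<dots> = \<phi> l * real (\<Sum>s\<in>{i. 0 < X i}. if coal X l s = Y then X s - (if s = l then 1 else 0) else 0)"
    unfolding of_nat_sum sum_distrib_left
  proof (rule sum.cong[OF refl])
    fix s show "g s = \<phi> l * real (if coal X l s = Y then X s - (if s = l then 1 else 0) else 0)"
      unfolding g_def by simp
  qed
  finally have q: "qrate (Kphi \<phi>) X Y = \<phi> l * real (\<Sum>s\<in>{i. 0 < X i}. if coal X l s = Y then X s - (if s = l then 1 else 0) else 0)" .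
  show "qrate (Kphi \<phi>) X Y = \<phi> (lX X) * real (card {p\<in>{2..npart X}. stp X p = Y})"
    using q[unfolded l_def] count_stp[OF x, of Y] by (simp only:)
  have "qtot (Kphi \<phi>) X = (\<Sum>j\<in>{j. l < j \<and> 0 < X j}. \<phi> l * real (X j - (if j = l then 1 else 0))) + \<phi> l * real (X l - (if l = l then 1 else 0))"
  proof -
    have a: "(\<Sum>j\<in>{j. l < j \<and> 0 < X j}. Kphi \<phi> l j * real (X j))
     = (\<Sum>j\<in>{j. l < j \<and> 0 < X j}. \<phi> l * real (X j - (if j = l then 1 else 0)))"
    proof (rule sum.cong[OF refl])
      fix j assume "j \<in> {j. l < j \<and> 0 < X j}"
      then show "Kphi \<phi> l j * real (X j) = \<phi> l * real (X j - (if j = l then 1 else 0))"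
        using K[of j] by simp
    qed
    have b: "Kphi \<phi> l l * (real (X l) - 1) = \<phi> l * real (X l - (if l = l then 1 else 0))"
      using K[of l] Xl by (simp add: of_nat_diff)
    show ?thesis unfolding qtot_def l_def[symmetric] a b ..
  qed
  also have "\<dots> = (\<Sum>s\<in>{i. 0 < X i}. \<phi> l * real (X s - (if s = l then 1 else 0)))"
    unfolding l_def by (rule supp_split[OF x(1) i, of "\<lambda>s. \<phi> (lX X) * real (X s - (if s = lX X then 1 else 0))", symmetric])
  also have "\<dots> = \<phi> l * (\<Sum>s\<in>{i. 0 < X i}. real (X s) - (if s = l then 1 else 0))"
    unfolding sum_distrib_left
  proof (rule sum.cong[OF refl])
    fix s assume "s \<in> {i. 0 < X i}"
    then show "\<phi> l * real (X s - (if s = l then 1 else 0)) = \<phi> l * (real (X s) - (if s = l then 1 else 0))"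
      by (auto simp: of_nat_diff)
  qed
  also have "\<dots> = \<phi> l * (real (npart X) - 1)"
  proof -
    have fin: "finite {i. 0 < X i}" using x(1) unfolding l1N_def by simp
    have "l \<in> {i. 0 < X i}" using Xl by simp
    have "(\<Sum>s\<in>{i. 0 < X i}. real (X s) - (if s = l then 1 else 0))
       = (\<Sum>s\<in>{i. 0 < X i}. real (X s)) - (\<Sum>s\<in>{i. 0 < X i}. (if s = l then 1 else 0))"
      by (rule sum_subtractf)
    also have "\<dots> = real (npart X) - 1"
      using fin \<open>l \<in> {i. 0 < X i}\<close> unfolding npart_def of_nat_sum by (simp add: sum.delta)
    finally show ?thesis by simp
  qed
  finally show "qtot (Kphi \<phi>) X = \<phi> (lX X) * real (npart X - 1)"
    using x(2) unfolding l_def by (simp add: of_nat_diff)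
qed

lemma factor: assumes pos: "\<forall>i\<ge>1. 0 < \<phi> i" and incr: "mono_on {1..} \<phi>" and x: "l1N X" "2 \<le> npart X"
  shows "qrate (Kphi \<phi>) X Y / qtot (Kphi \<phi>) X = real (card {p\<in>{2..npart X}. stp X p = Y}) / real (npart X - 1)"
    "0 < qtot (Kphi \<phi>) X"
proof -
  obtain i where i: "0 < X i" using npart_ex[OF x(1)] x(2) by auto
  have p: "0 < \<phi> (lX X)" using pos lX_ge1[of X i, OF x(1) i] by simp
  show "qrate (Kphi \<phi>) X Y / qtot (Kphi \<phi>) X = real (card {p\<in>{2..npart X}. stp X p = Y}) / real (npart X - 1)"
    using qrate_eq[OF incr x] p by simp
  show "0 < qtot (Kphi \<phi>) X" using qrate_eq(2)[OF incr x] p x(2) by simp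
qed

fun chain :: "nat \<Rightarrow> state \<Rightarrow> (nat \<Rightarrow> nat) \<Rightarrow> nat \<Rightarrow> state" where
  "chain n X0 r 0 = X0"
| "chain n X0 r (Suc k) = (if k < n - 1 then stp (chain n X0 r k) (r k) else chain n X0 r k)"

lemma ch_valid: assumes "l1N X0" "npart X0 = n"
  shows "k \<le> n - 1 \<Longrightarrow> l1N (chain n X0 r k) \<and> npart (chain n X0 r k) = n - k"
proof (induction k)
  case 0 then show ?case using assms by simp
next
  case (Suc k)
  then have ih: "l1N (chain n X0 r k)" "npart (chain n X0 r k) = n - k" "k < n - 1" by auto
  have "2 \<le> npart (chain n X0 r k)" using ih by simp
  then show ?case using stp_facts(1,2)[OF ih(1)] ih by simp
qed

lemma ch_const: "n - 1 \<le> k \<Longrightarrow> chain n X0 r k = chain n X0 r (n - 1)"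
proof (induction k)
  case (Suc k)
  then show ?case by (cases "n - 1 \<le> k") (auto simp: le_Suc_eq)
qed simp

lemma ch_valid': assumes "l1N X0" "npart X0 = n"
  shows "l1N (chain n X0 r k)"
proof (cases "k \<le> n - 1")
  case True then show ?thesis using ch_valid[OF assms] by blast
next
  case False then show ?thesis using ch_valid[OF assms, of "n - 1"] ch_const[of n k] by simp
qed

lemma ch_dom: assumes x: "l1N X0" "npart X0 = n" and y: "l1N Y0" "npart Y0 = n" and d: "Dom Y0 X0"
  shows "Dom (chain n Y0 r k) (chain n X0 r k)"
proof (induction k)
  case 0 then show ?case using d by simp
next
  case (Suc k)
  show ?case
  proof (cases "k < n - 1")
    case True
    then have v: "l1N (chain n X0 r k)" "npart (chain n X0 r k) = n - k"
       "l1N (chain n Y0 r k)" "npart (chain n Y0 r k) = n - k"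
      using ch_valid[OF x, of k] ch_valid[OF y, of k] by auto
    then show ?thesis using stp_dom[OF v(1) v(3) _ _ Suc.IH] True by simp
  qed (use Suc in simp)
qed

lemma ch_zero: assumes x: "l1N X0" "npart X0 = n"
  and z: "Fc (chain n X0 r k) i = 0"
  shows "k \<le> k' \<Longrightarrow> Fc (chain n X0 r k') i = 0"
proof (induction k' rule: dec_induct)
  case base then show ?case using z .
next
  case (step k')
  show ?case
  proof (cases "k' < n - 1")
    case True
    then have v: "l1N (chain n X0 r k')" "npart (chain n X0 r k') = n - k'"
      using ch_valid[OF x, of k'] by auto
    then show ?thesis using stp_zero[OF v(1) _ step.IH] True by simp
  qed (use step in simp)
qed

definition kk :: "nat \<Rightarrow> (nat \<Rightarrow> real) \<Rightarrow> real \<Rightarrow> nat" where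
  "kk n h t = card {j. j < n - 1 \<and> (\<Sum>i\<le>j. h i) \<le> t}"

lemma cpath_kk: "cpath n (z, h) t = z (kk n h t)"
  unfolding cpath_def kk_def by simp

lemma kk_le: "kk n h t \<le> n - 1"
  unfolding kk_def by (rule order_trans[OF card_mono[of "{..<n-1}"]]) auto

lemma kk_mono: assumes "\<forall>j<n - 1. hX j \<le> hY j" shows "kk n hY t \<le> kk n hX t"
  unfolding kk_def
proof (rule card_mono)
  show "finite {j. j < n - 1 \<and> (\<Sum>i\<le>j. hX i) \<le> t}" by simp
  show "{j. j < n - 1 \<and> (\<Sum>i\<le>j. hY i) \<le> t} \<subseteq> {j. j < n - 1 \<and> (\<Sum>i\<le>j. hX i) \<le> t}"
  proof safe
    fix j assume j: "j < n - 1" "(\<Sum>i\<le>j. hY i) \<le> t"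
    have "(\<Sum>i\<le>j. hX i) \<le> (\<Sum>i\<le>j. hY i)" using assms j(1) by (intro sum_mono) auto
    then show "(\<Sum>i\<le>j. hX i) \<le> t" using j by simp
  qed
qed

lemma zero_Fc: assumes "l1N Z" shows "(\<forall>m\<in>{1..i}. Z m = 0) = (Fc Z i = 0)"
proof -
  have Z0: "Z 0 = 0" using assms unfolding l1N_def by simp
  have a: "(Fc Z i = 0) = (\<forall>m\<le>i. Z m = 0)" unfolding Fc_def by auto
  have b: "(\<forall>m\<le>i. Z m = 0) = (\<forall>m\<in>{1..i}. Z m = 0)"
  proof
    assume h: "\<forall>m\<in>{1..i}. Z m = 0"
    show "\<forall>m\<le>i. Z m = 0"
    proof (intro allI impI)
      fix m assume "m \<le> i" then show "Z m = 0" using h Z0 by (cases m) auto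
    qed
  qed auto
  show ?thesis using a b by simp
qed

lemma path_rel: assumes x: "l1N X0" "npart X0 = n" and y: "l1N Y0" "npart Y0 = n" and d: "Dom Y0 X0"
  and n: "1 \<le> n" and h: "\<forall>j<n - 1. hX j \<le> hY j"
  shows "(\<forall>i\<ge>1. Tsub i (cpath n (chain n X0 r, hX)) \<le> Tsub i (cpath n (chain n Y0 r, hY)))
     \<and> Tabs (cpath n (chain n X0 r, hX)) \<le> Tabs (cpath n (chain n Y0 r, hY))"
proof (intro conjI allI impI)
  fix i :: nat
  have sub: "{t. 0 < t \<and> (\<forall>m\<in>{1..i}. cpath n (chain n Y0 r, hY) t m = 0)}
     \<subseteq> {t. 0 < t \<and> (\<forall>m\<in>{1..i}. cpath n (chain n X0 r, hX) t m = 0)}"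
  proof (rule subsetI)
    fix t :: real assume "t \<in> {t. 0 < t \<and> (\<forall>m\<in>{1..i}. cpath n (chain n Y0 r, hY) t m = 0)}"
    then have t: "0 < t" and z: "\<forall>m\<in>{1..i}. cpath n (chain n Y0 r, hY) t m = 0" by auto
    define a where "a = kk n hY t"
    define b where "b = kk n hX t"
    have ab: "a \<le> b" using kk_mono[OF h] unfolding a_def b_def .
    have "Fc (chain n Y0 r a) i = 0" using z zero_Fc[OF ch_valid'[OF y]] unfolding cpath_kk a_def by blast
    moreover have "Fc (chain n X0 r a) i \<le> Fc (chain n Y0 r a) i" using ch_dom[OF x y d, of r a] unfolding Dom_def
      by blast
    ultimately have "Fc (chain n X0 r a) i = 0" by simp
    then have "Fc (chain n X0 r b) i = 0" using ch_zero[OF x] ab by blast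
    then have "\<forall>m\<in>{1..i}. cpath n (chain n X0 r, hX) t m = 0"
      using zero_Fc[OF ch_valid'[OF x]] unfolding cpath_kk b_def by blast
    then show "t \<in> {t. 0 < t \<and> (\<forall>m\<in>{1..i}. cpath n (chain n X0 r, hX) t m = 0)}" using t by simp
  qed
  show "Tsub i (cpath n (chain n X0 r, hX)) \<le> Tsub i (cpath n (chain n Y0 r, hY))"
    unfolding Tsub_def using sub by (intro Inf_superset_mono image_mono)
next
  have sub: "{t. 0 \<le> t \<and> npart (cpath n (chain n Y0 r, hY) t) = 1}
     \<subseteq> {t. 0 \<le> t \<and> npart (cpath n (chain n X0 r, hX) t) = 1}"
  proof safe
    fix t :: real assume t: "0 \<le> t" and z: "npart (cpath n (chain n Y0 r, hY) t) = 1"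
    define a where "a = kk n hY t"
    define b where "b = kk n hX t"
    have ab: "a \<le> b" using kk_mono[OF h] unfolding a_def b_def .
    have a1: "a \<le> n - 1" "b \<le> n - 1" using kk_le unfolding a_def b_def by auto
    have "n - a = 1" using z ch_valid[OF y a1(1)] unfolding cpath_kk a_def by simp
    then have "b = n - 1" using ab a1 by simp
    then show "npart (cpath n (chain n X0 r, hX) t) = 1"
      using ch_valid[OF x, of b] n unfolding cpath_kk b_def by simp
  qed
  show "Tabs (cpath n (chain n X0 r, hX)) \<le> Tabs (cpath n (chain n Y0 r, hY))"
    unfolding Tabs_def using sub by (intro Inf_superset_mono image_mono)
qed

definition expM :: "real measure" where "expM = density lborel (exponential_density 1)"

lemma expM_prob: "prob_space expM"
  unfolding expM_def by (rule prob_space_exponential_density) simp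

lemma sets_expM[measurable_cong]: "sets expM = sets borel"
  unfolding expM_def by simp

lemma space_expM: "space expM = UNIV"
  unfolding expM_def by simp

lemma expM_tail: assumes "0 \<le> a" shows "measure expM {e. a < e} = exp (- a)"
proof -
  interpret prob_space expM by (rule expM_prob)
  have "emeasure expM {..a} = ennreal (erlang_CDF 0 1 a)"
    unfolding expM_def by (rule emeasure_erlang_density) simp
  then have m: "measure expM {..a} = 1 - exp (- a)"
    using assms by (simp add: emeasure_eq_measure erlang_CDF_0 measure_nonneg)
  have "{e. a < e} = space expM - {..a}" by (auto simp: space_expM)
  then have "measure expM {e. a < e} = 1 - measure expM {..a}"
    by (simp add: prob_compl sets_expM)
  then show ?thesis using m by simp
qed

definition RM :: "nat \<Rightarrow> nat \<Rightarrow> nat pmf" where "RM n j = pmf_of_set {2..max 2 (n - j)}"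

definition M0 :: "nat \<Rightarrow> nat \<Rightarrow> (nat \<times> real) measure" where
  "M0 n j = measure_pmf (RM n j) \<Otimes>\<^sub>M expM"

definition Om :: "nat \<Rightarrow> (nat \<Rightarrow> nat \<times> real) measure" where
  "Om n = PiM UNIV (M0 n)"

lemma M0_prob: "prob_space (M0 n j)"
  unfolding M0_def by (intro prob_space_pair prob_space_measure_pmf expM_prob)

lemma Om_pps: "product_prob_space (M0 n)"
  by (rule product_prob_spaceI) (rule M0_prob)

lemma Om_prob: "prob_space (Om n)"
proof -
  interpret product_prob_space "M0 n" UNIV by (rule Om_pps)
  show ?thesis unfolding Om_def by (rule prob_space_axioms)
qed

lemma M0_rect: "measure (M0 n j) (A \<times> C) = measure (RM n j) A * measure expM C" if "C \<in> sets borel"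
proof -
  interpret sigma_finite_measure expM using expM_prob by (rule prob_space_imp_sigma_finite)
  have "emeasure (M0 n j) (A \<times> C) = emeasure (RM n j) A * emeasure expM C"
    unfolding M0_def by (rule emeasure_pair_measure_Times) (use that in \<open>auto simp: sets_expM\<close>)
  then show ?thesis
    by (simp add: measure_def enn2real_mult)
qed

lemma ranks_meas: "(\<lambda>\<omega>. fst (\<omega> j)) \<in> Om n \<rightarrow>\<^sub>M count_space UNIV"
proof -
  have "(\<lambda>\<omega>. \<omega> j) \<in> Om n \<rightarrow>\<^sub>M M0 n j" unfolding Om_def by (rule measurable_component_singleton) simp
  moreover have "fst \<in> M0 n j \<rightarrow>\<^sub>M count_space UNIV"
  proof -
    have "fst \<in> M0 n j \<rightarrow>\<^sub>M measure_pmf (RM n j)" unfolding M0_def by (rule measurable_fst)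
    then show ?thesis by (subst (asm) measurable_cong_sets[OF refl sets_measure_pmf_count_space])
  qed
  ultimately show ?thesis by (rule measurable_compose)
qed

lemma es_meas: "(\<lambda>\<omega>. snd (\<omega> j)) \<in> borel_measurable (Om n)"
proof -
  have "(\<lambda>\<omega>. \<omega> j) \<in> Om n \<rightarrow>\<^sub>M M0 n j" unfolding Om_def by (rule measurable_component_singleton) simp
  moreover have "snd \<in> borel_measurable (M0 n j)"
  proof -
    have "snd \<in> M0 n j \<rightarrow>\<^sub>M expM" unfolding M0_def by (rule measurable_snd)
    then show ?thesis by (subst (asm) measurable_cong_sets[OF refl sets_expM])
  qed
  ultimately show ?thesis by (rule measurable_compose)
qed

lemma chain_meas: "(\<lambda>\<omega>. chain n X0 (\<lambda>j. fst (\<omega> j)) k) \<in> Om n \<rightarrow>\<^sub>M count_space UNIV"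
proof (induction k)
  case 0 then show ?case by simp
next
  case (Suc k)
  have e: "(\<lambda>\<omega>. chain n X0 (\<lambda>j. fst (\<omega> j)) (Suc k))
     = (\<lambda>\<omega>. (\<lambda>i \<omega>. if k < n - 1 then stp (chain n X0 (\<lambda>j. fst (\<omega> j)) k) i else chain n X0 (\<lambda>j. fst (\<omega> j)) k) (fst (\<omega> k)) \<omega>)"
    by simp
  show ?case unfolding e
  proof (rule measurable_compose_countable'[OF _ ranks_meas])
    fix i :: nat
    show "(\<lambda>\<omega>. if k < n - 1 then stp (chain n X0 (\<lambda>j. fst (\<omega> j)) k) i else chain n X0 (\<lambda>j. fst (\<omega> j)) k)
      \<in> Om n \<rightarrow>\<^sub>M count_space UNIV"
      using measurable_compose[OF Suc.IH, of "\<lambda>z. if k < n - 1 then stp z i else z" "count_space UNIV"]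
      by simp
  qed simp
qed

lemma chain_eq: assumes z0: "zs 0 = X0"
  shows "k \<le> n - 1 \<Longrightarrow> (\<forall>j\<in>{1..k}. chain n X0 r j = zs j) \<longleftrightarrow> (\<forall>j<k. stp (zs j) (r j) = zs (Suc j))"
proof (induction k)
  case 0 then show ?case by simp
next
  case (Suc k)
  have kn: "k < n - 1" using Suc.prems by simp
  have ih: "(\<forall>j\<in>{1..k}. chain n X0 r j = zs j) \<longleftrightarrow> (\<forall>j<k. stp (zs j) (r j) = zs (Suc j))"
    by (rule Suc.IH) (use kn in simp)
  have a: "(\<forall>j\<in>{1..Suc k}. chain n X0 r j = zs j) \<longleftrightarrow> (\<forall>j\<in>{1..k}. chain n X0 r j = zs j) \<and> chain n X0 r (Suc k) = zs (Suc k)"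
    by (subst atLeastAtMostSuc_conv) (auto simp del: chain.simps)
  have b: "(\<forall>j<Suc k. stp (zs j) (r j) = zs (Suc j)) \<longleftrightarrow> (\<forall>j<k. stp (zs j) (r j) = zs (Suc j)) \<and> stp (zs k) (r k) = zs (Suc k)"
    by (auto simp: less_Suc_eq)
  have c: "(\<forall>j\<in>{1..k}. chain n X0 r j = zs j) \<Longrightarrow> chain n X0 r k = zs k"
    using z0 by (cases k) (auto simp del: chain.simps(2))
  show ?case unfolding a b using ih c kn by auto
qed

lemma card_2m: "card {2..m::nat} = m - 1" by simp

lemma prod_ind:
  fixes \<phi> :: "nat \<Rightarrow> real"
  assumes pos: "\<forall>i\<ge>1. 0 < \<phi> i" and incr: "mono_on {1..} \<phi>"
    and x: "l1N X0" "npart X0 = n" and z0: "zs 0 = X0" and t: "\<forall>j. 0 \<le> t j"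
  defines "a \<equiv> \<lambda>j. measure (RM n j) {p. stp (zs j) p = zs (Suc j)}
              * measure expM {e. t j < max 0 e / qtot (Kphi \<phi>) (zs j)}"
    and "b \<equiv> \<lambda>j. qrate (Kphi \<phi>) (zs j) (zs (Suc j)) / qtot (Kphi \<phi>) (zs j)
              * exp (- qtot (Kphi \<phi>) (zs j) * t j)"
  shows "k \<le> n - 1 \<Longrightarrow> (\<Prod>j<k. a j) = (\<Prod>j<k. b j) \<and> ((\<Prod>j<k. a j) \<noteq> 0 \<longrightarrow> l1N (zs k) \<and> npart (zs k) = n - k)"
proof (induction k)
  case 0 then show ?case using x z0 by simp
next
  case (Suc k)
  have kn: "k < n - 1" using Suc.prems by simp
  have ih0: "(\<Prod>j<k. a j) = (\<Prod>j<k. b j) \<and> ((\<Prod>j<k. a j) \<noteq> 0 \<longrightarrow> l1N (zs k) \<and> npart (zs k) = n - k)"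
    by (rule Suc.IH) (use kn in simp)
  have ih: "(\<Prod>j<k. a j) = (\<Prod>j<k. b j)" "(\<Prod>j<k. a j) \<noteq> 0 \<longrightarrow> l1N (zs k) \<and> npart (zs k) = n - k"
    using ih0 by (rule conjunct1, rule conjunct2)
  show ?case
  proof (cases "(\<Prod>j<k. a j) = 0")
    case True then show ?thesis using ih by simp
  next
    case False
    then have v: "l1N (zs k)" "npart (zs k) = n - k" using ih by auto
    define m where "m = n - k"
    have m2: "2 \<le> m" using kn m_def by simp
    have v2: "2 \<le> npart (zs k)" using v m2 m_def by simp
    define q where "q = qtot (Kphi \<phi>) (zs k)"
    have q: "0 < q" using factor(2)[OF pos incr v(1) v2] q_def by simp
    have tq: "0 \<le> q * t k" using q t by simp
    have RM: "RM n k = pmf_of_set {2..m}" unfolding RM_def m_def using m2 m_def by (simp add: max_def)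
    define c where "c = card {p\<in>{2..m}. stp (zs k) p = zs (Suc k)}"
    have "{2..m} \<inter> {p. stp (zs k) p = zs (Suc k)} = {p\<in>{2..m}. stp (zs k) p = zs (Suc k)}" by auto
    then have m1: "measure (RM n k) {p. stp (zs k) p = zs (Suc k)} = real c / real (m - 1)"
      unfolding RM c_def using m2 by (subst measure_pmf_of_set) auto
    have "{e. t k < max 0 e / q} = {e. q * t k < e}"
    proof (intro set_eqI iffI; simp)
      fix e assume "t k < max 0 e / q"
      then have "q * t k < max 0 e" using q by (simp add: field_simps)
      then show "q * t k < e" using tq by (simp add: max_def split: if_splits)
    next
      fix e assume "q * t k < e"
      then have "q * t k < max 0 e" by simp
      then show "t k < max 0 e / q" using q by (simp add: field_simps)
    qed
    then have m2': "measure expM {e. t k < max 0 e / q} = exp (- (q * t k))"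
      using expM_tail[OF tq] by simp
    have ak: "a k = real c / real (m - 1) * exp (- (q * t k))" unfolding a_def using m1 m2' q_def by simp
    have bk: "b k = real c / real (m - 1) * exp (- (q * t k))" unfolding b_def
      using factor(1)[OF pos incr v(1) v2, of "zs (Suc k)"] v(2) q_def c_def m_def by simp
    have eq: "(\<Prod>j<Suc k. a j) = (\<Prod>j<Suc k. b j)" using ih(1) ak bk by simp
    have "(\<Prod>j<Suc k. a j) \<noteq> 0 \<longrightarrow> l1N (zs (Suc k)) \<and> npart (zs (Suc k)) = n - Suc k"
    proof
      assume "(\<Prod>j<Suc k. a j) \<noteq> 0"
      then have "a k \<noteq> 0" by simp
      then have "c \<noteq> 0" using ak by auto
      then obtain p where "p \<in> {2..m}" "stp (zs k) p = zs (Suc k)" unfolding c_def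
        by (metis (mono_tags, lifting) card.empty empty_Collect_eq)
      then show "l1N (zs (Suc k)) \<and> npart (zs (Suc k)) = n - Suc k"
        using stp_facts(1,2)[OF v(1) v2, of p] v(2) by auto
    qed
    with eq show ?thesis by (rule conjI)
  qed
qed

definition hh :: "(nat \<Rightarrow> nat \<Rightarrow> real) \<Rightarrow> nat \<Rightarrow> state \<Rightarrow> (nat \<Rightarrow> nat \<times> real) \<Rightarrow> nat \<Rightarrow> real" where
  "hh K n X0 \<omega> j = max 0 (snd (\<omega> j)) / qtot K (chain n X0 (\<lambda>j. fst (\<omega> j)) j)"

definition jhmap :: "(nat \<Rightarrow> nat \<Rightarrow> real) \<Rightarrow> nat \<Rightarrow> state \<Rightarrow> (nat \<Rightarrow> nat \<times> real) \<Rightarrow> jh" where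
  "jhmap K n X0 \<omega> = (chain n X0 (\<lambda>j. fst (\<omega> j)), \<lambda>j. hh K n X0 \<omega> j)"

lemma space_M0: "space (M0 n j) = UNIV"
  unfolding M0_def by (simp add: space_pair_measure space_expM)

lemma space_Om: "space (Om n) = UNIV"
  unfolding Om_def space_PiM space_M0 by simp

lemma hh_meas: "(\<lambda>\<omega>. hh K n X0 \<omega> j) \<in> borel_measurable (Om n)"
  unfolding hh_def
proof (rule borel_measurable_divide)
  show "(\<lambda>x. max 0 (snd (x j))) \<in> borel_measurable (Om n)"
    by (rule borel_measurable_max) (auto intro: es_meas)
  show "(\<lambda>x. qtot K (chain n X0 (\<lambda>j. fst (x j)) j)) \<in> borel_measurable (Om n)"
    by (rule measurable_compose[OF chain_meas]) simp
qed

lemma jhmap_meas: "jhmap K n X0 \<in> Om n \<rightarrow>\<^sub>M jhspace"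
  unfolding jhspace_def jhmap_def
proof (rule measurable_Pair)
  show "(\<lambda>\<omega>. chain n X0 (\<lambda>j. fst (\<omega> j))) \<in> Om n \<rightarrow>\<^sub>M Pi\<^sub>M UNIV (\<lambda>_. count_space UNIV)"
    using measurable_PiM_single'[of UNIV "\<lambda>i \<omega>. chain n X0 (\<lambda>j. fst (\<omega> j)) i" "Om n" "\<lambda>_. count_space UNIV"]
    chain_meas by simp
  show "(\<lambda>\<omega> j. hh K n X0 \<omega> j) \<in> Om n \<rightarrow>\<^sub>M Pi\<^sub>M UNIV (\<lambda>_. borel)"
    using measurable_PiM_single'[of UNIV "\<lambda>i \<omega>. hh K n X0 \<omega> i" "Om n" "\<lambda>_. borel"]
    hh_meas by simp
qed

lemma core:
  fixes \<phi> :: "nat \<Rightarrow> real"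
  assumes pos: "\<forall>i\<ge>1. 0 < \<phi> i" and incr: "mono_on {1..} \<phi>"
    and x: "l1N X0" "npart X0 = n" and kn: "k \<le> n - 1" and z0: "zs 0 = X0" and t: "\<forall>j. 0 \<le> t j"
  shows "measure (Om n) {\<omega>\<in>space (Om n). (\<forall>j\<in>{1..k}. chain n X0 (\<lambda>j. fst (\<omega> j)) j = zs j)
              \<and> (\<forall>j<k. t j < hh (Kphi \<phi>) n X0 \<omega> j)}
     = (\<Prod>j\<in>{1..k}. qrate (Kphi \<phi>) (zs (j - 1)) (zs j) / qtot (Kphi \<phi>) (zs (j - 1))
                             * exp (- qtot (Kphi \<phi>) (zs (j - 1)) * t (j - 1)))"
proof -
  define A where "A j = {p. stp (zs j) p = zs (Suc j)}" for j
  define C where "C j = {e. t j < max 0 e / qtot (Kphi \<phi>) (zs j)}" for j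
  have C: "C j \<in> sets borel" for j unfolding C_def by measurable
  have AC: "A j \<times> C j \<in> sets (M0 n j)" for j
    unfolding M0_def using C by (intro pair_measureI) (auto simp: sets_expM)
  have seq: "{\<omega>\<in>space (Om n). (\<forall>j\<in>{1..k}. chain n X0 (\<lambda>j. fst (\<omega> j)) j = zs j)
              \<and> (\<forall>j<k. t j < hh (Kphi \<phi>) n X0 \<omega> j)}
      = prod_emb UNIV (M0 n) {..<k} (Pi\<^sub>E {..<k} (\<lambda>j. A j \<times> C j))"
  proof -
    have pe: "prod_emb UNIV (M0 n) {..<k} (Pi\<^sub>E {..<k} (\<lambda>j. A j \<times> C j))
       = {\<omega>. \<forall>j<k. \<omega> j \<in> A j \<times> C j}"
    proof (subst prod_emb_PiE)
      show "(\<Pi>\<^sub>E i\<in>UNIV. if i \<in> {..<k} then A i \<times> C i else space (M0 n i)) = {\<omega>. \<forall>j<k. \<omega> j \<in> A j \<times> C j}"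
      proof (intro set_eqI iffI)
        fix \<omega> assume "\<omega> \<in> (\<Pi>\<^sub>E i\<in>UNIV. if i \<in> {..<k} then A i \<times> C i else space (M0 n i))"
        then have w: "\<omega> j \<in> (if j \<in> {..<k} then A j \<times> C j else space (M0 n j))" for j by (auto simp: PiE_iff)
        have "\<omega> j \<in> A j \<times> C j" if "j < k" for j using w[of j] that by simp
        then show "\<omega> \<in> {\<omega>. \<forall>j<k. \<omega> j \<in> A j \<times> C j}" by auto
      qed (auto simp: PiE_iff space_M0)
    qed (auto simp: space_M0)
    have "(\<forall>j\<in>{1..k}. chain n X0 (\<lambda>j. fst (\<omega> j)) j = zs j) \<and> (\<forall>j<k. t j < hh (Kphi \<phi>) n X0 \<omega> j)
       \<longleftrightarrow> (\<forall>j<k. \<omega> j \<in> A j \<times> C j)" for \<omega>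
    proof -
      have ce: "(\<forall>j\<in>{1..k}. chain n X0 (\<lambda>j. fst (\<omega> j)) j = zs j) \<longleftrightarrow> (\<forall>j<k. fst (\<omega> j) \<in> A j)"
        using chain_eq[of zs X0 k n "\<lambda>j. fst (\<omega> j)", OF z0 kn] unfolding A_def by simp
      show ?thesis
      proof
        assume h: "(\<forall>j\<in>{1..k}. chain n X0 (\<lambda>j. fst (\<omega> j)) j = zs j) \<and> (\<forall>j<k. t j < hh (Kphi \<phi>) n X0 \<omega> j)"
        have cz: "chain n X0 (\<lambda>j. fst (\<omega> j)) j = zs j" if "j < k" for j
          using h that z0 by (cases j) (auto simp del: chain.simps(2))
        show "\<forall>j<k. \<omega> j \<in> A j \<times> C j"
          using h ce cz unfolding C_def hh_def by (auto simp: mem_Times_iff)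
      next
        assume h: "\<forall>j<k. \<omega> j \<in> A j \<times> C j"
        then have h1: "\<forall>j\<in>{1..k}. chain n X0 (\<lambda>j. fst (\<omega> j)) j = zs j" using ce by (auto simp: mem_Times_iff)
        have cz: "chain n X0 (\<lambda>j. fst (\<omega> j)) j = zs j" if "j < k" for j
          using h1 that z0 by (cases j) (auto simp del: chain.simps(2))
        show "(\<forall>j\<in>{1..k}. chain n X0 (\<lambda>j. fst (\<omega> j)) j = zs j) \<and> (\<forall>j<k. t j < hh (Kphi \<phi>) n X0 \<omega> j)"
          using h1 h cz unfolding C_def hh_def by (auto simp: mem_Times_iff)
      qed
    qed
    then show ?thesis unfolding pe space_Om by auto
  qed
  note pi = prod_ind[where zs=zs, OF pos incr x z0 t kn]
  have "measure (Om n) (prod_emb UNIV (M0 n) {..<k} (Pi\<^sub>E {..<k} (\<lambda>j. A j \<times> C j)))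
      = (\<Prod>j<k. measure (M0 n j) (A j \<times> C j))"
    unfolding Om_def by (rule product_prob_space.measure_PiM_emb[OF Om_pps]) (use AC in auto)
  also have "\<dots> = (\<Prod>j<k. measure (RM n j) (A j) * measure expM (C j))"
    using M0_rect C by simp
  also have "\<dots> = (\<Prod>j<k. qrate (Kphi \<phi>) (zs j) (zs (Suc j)) / qtot (Kphi \<phi>) (zs j)
              * exp (- qtot (Kphi \<phi>) (zs j) * t j))"
    unfolding A_def C_def by (rule conjunct1[OF pi])
  also have "\<dots> = (\<Prod>j\<in>{1..k}. qrate (Kphi \<phi>) (zs (j - 1)) (zs j) / qtot (Kphi \<phi>) (zs (j - 1))
                             * exp (- qtot (Kphi \<phi>) (zs (j - 1)) * t (j - 1)))"
    by (subst One_nat_def, subst prod.atLeast1_atMost_eq) simp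
  finally show ?thesis unfolding seq .
qed

lemma jh_Z: "(\<lambda>z::jh. fst z j) \<in> jhspace \<rightarrow>\<^sub>M count_space UNIV"
  unfolding jhspace_def
  by (rule measurable_compose[OF measurable_fst measurable_component_singleton]) simp

lemma jh_H: "(\<lambda>z::jh. snd z j) \<in> borel_measurable jhspace"
  unfolding jhspace_def
  by (rule measurable_compose[OF measurable_snd measurable_component_singleton]) simp

lemma law_distr:
  fixes \<phi> :: "nat \<Rightarrow> real"
  assumes pos: "\<forall>i\<ge>1. 0 < \<phi> i" and incr: "mono_on {1..} \<phi>"
    and x: "l1N X0" "npart X0 = n"
    and F: "F \<in> Om n \<rightarrow>\<^sub>M N" and g: "g \<in> N \<rightarrow>\<^sub>M jhspace"
    and gF: "\<And>\<omega>. g (F \<omega>) = jhmap (Kphi \<phi>) n X0 \<omega>"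
  shows "mdc_law (Kphi \<phi>) X0 (distr (Om n) N F) (\<lambda>\<omega>. fst (g \<omega>)) (\<lambda>\<omega>. snd (g \<omega>))"
proof -
  have gZ[measurable]: "(\<lambda>\<omega>. fst (g \<omega>) j) \<in> N \<rightarrow>\<^sub>M count_space UNIV" for j
    using measurable_compose[OF g jh_Z] by simp
  have gH[measurable]: "(\<lambda>\<omega>. snd (g \<omega>) j) \<in> borel_measurable N" for j
    using measurable_compose[OF g jh_H] by simp
  show ?thesis unfolding mdc_law_def
  proof (intro conjI allI impI)
    show "prob_space (distr (Om n) N F)"
      by (rule prob_space.prob_space_distr[OF Om_prob F])
    have s0: "{\<omega> \<in> space N. fst (g \<omega>) 0 = X0} \<in> sets N" by measurable
    show "AE \<omega> in distr (Om n) N F. fst (g \<omega>) 0 = X0"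
      by (subst AE_distr_iff[OF F s0]) (simp add: gF jhmap_def)
  next
    fix k :: nat and zs :: "nat \<Rightarrow> state" and t :: "nat \<Rightarrow> real"
    assume kn: "k \<le> npart X0 - 1" and z0: "zs 0 = X0" and t: "\<forall>j. 0 \<le> (t j :: real)"
    define E where "E = {\<omega>\<in>space (distr (Om n) N F). (\<forall>j\<in>{1..k}. fst (g \<omega>) j = zs j) \<and> (\<forall>j<k. t j < snd (g \<omega>) j)}"
    have E': "E = {\<omega>\<in>space N. (\<forall>j\<in>{1..k}. fst (g \<omega>) j = zs j) \<and> (\<forall>j<k. t j < snd (g \<omega>) j)}"
      unfolding E_def by simp
    have EN: "E \<in> sets N" unfolding E' by measurable
    show "E \<in> sets (distr (Om n) N F)" using EN by simp
    have pre: "F -` E \<inter> space (Om n) = {\<omega>\<in>space (Om n). (\<forall>j\<in>{1..k}. chain n X0 (\<lambda>j. fst (\<omega> j)) j = zs j)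
              \<and> (\<forall>j<k. t j < hh (Kphi \<phi>) n X0 \<omega> j)}"
      unfolding E' using measurable_space[OF F] by (auto simp: gF jhmap_def)
    have "measure (distr (Om n) N F) E = measure (Om n) (F -` E \<inter> space (Om n))"
      by (rule measure_distr[OF F EN])
    also have "\<dots> = (\<Prod>j\<in>{1..k}. qrate (Kphi \<phi>) (zs (j - 1)) (zs j) / qtot (Kphi \<phi>) (zs (j - 1))
                             * exp (- qtot (Kphi \<phi>) (zs (j - 1)) * t (j - 1)))"
      unfolding pre by (rule core[where zs=zs and k=k, OF pos incr x _ z0 t]) (use kn x in simp)
    finally show "measure (distr (Om n) N F) E = (\<Prod>j\<in>{1..k}. qrate (Kphi \<phi>) (zs (j - 1)) (zs j) / qtot (Kphi \<phi>) (zs (j - 1))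
                             * exp (- qtot (Kphi \<phi>) (zs (j - 1)) * t (j - 1)))" .
  qed
qed

lemma chain_trunc: "(\<forall>j<n. r j = r' j) \<Longrightarrow> chain n X0 r k = chain n X0 r' k"
  by (induction k) auto

definition lr :: "nat list \<Rightarrow> nat \<Rightarrow> nat" where "lr l j = (if j < length l then l ! j else 0)"

lemma lX_dom: assumes x: "l1N X" "1 \<le> npart X" and y: "l1N Y" "1 \<le> npart Y" and d: "Dom Y X"
  shows "lX Y \<le> lX X"
proof -
  obtain i where i: "0 < X i" using npart_ex[OF x] by auto
  obtain j where j: "0 < Y j" using npart_ex[OF y] by auto
  show ?thesis
    using Fc_pos_lX[of X i "lX X", OF i] Fc_pos_lX[of Y j "lX X", OF j] d unfolding Dom_def
    by (metis le_trans order_refl)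
qed

lemma hh_le:
  fixes \<phi> :: "nat \<Rightarrow> real"
  assumes pos: "\<forall>i\<ge>1. 0 < \<phi> i" and incr: "mono_on {1..} \<phi>"
    and x: "l1N X0" "npart X0 = n" and y: "l1N Y0" "npart Y0 = n" and d: "Dom Y0 X0" and j: "j < n - 1"
  shows "hh (Kphi \<phi>) n X0 \<omega> j \<le> hh (Kphi \<phi>) n Y0 \<omega> j"
proof -
  define r where "r = (\<lambda>j. fst (\<omega> j))"
  define zX where "zX = chain n X0 r j"
  define zY where "zY = chain n Y0 r j"
  have vX: "l1N zX" "npart zX = n - j" using ch_valid[OF x, of j r] j zX_def by auto
  have vY: "l1N zY" "npart zY = n - j" using ch_valid[OF y, of j r] j zY_def by auto
  have m2: "2 \<le> n - j" using j by simp
  have dd: "Dom zY zX" using ch_dom[OF x y d] zX_def zY_def by simp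
  have l: "lX zY \<le> lX zX" using lX_dom[OF vX(1) _ vY(1) _ dd] vX vY m2 by simp
  obtain i where i: "0 < zY i" using npart_ex[OF vY(1)] vY m2 by auto
  have l1: "1 \<le> lX zY" using lX_ge1[of zY i, OF vY(1) i] .
  have qX: "qtot (Kphi \<phi>) zX = \<phi> (lX zX) * real (n - j - 1)" using qrate_eq(2)[OF incr vX(1)] vX m2 by simp
  have qY: "qtot (Kphi \<phi>) zY = \<phi> (lX zY) * real (n - j - 1)" using qrate_eq(2)[OF incr vY(1)] vY m2 by simp
  have p: "0 < \<phi> (lX zY)" using pos l1 by simp
  have mo: "\<phi> (lX zY) \<le> \<phi> (lX zX)" using incr l l1 unfolding mono_on_def by simp
  have qq: "qtot (Kphi \<phi>) zY \<le> qtot (Kphi \<phi>) zX" "0 < qtot (Kphi \<phi>) zY"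
    using qX qY mo p m2 by (auto intro: mult_right_mono)
  have "max 0 (snd (\<omega> j)) / qtot (Kphi \<phi>) zX \<le> max 0 (snd (\<omega> j)) / qtot (Kphi \<phi>) zY"
    using qq by (intro divide_left_mono) auto
  then show ?thesis unfolding hh_def r_def[symmetric] zX_def[symmetric] zY_def[symmetric] .
qed

lemma sing_meas: "{z} \<in> sets (Pi\<^sub>M (UNIV::nat set) (\<lambda>_. count_space (UNIV :: 'a set)))"
proof -
  have "{f \<in> space (Pi\<^sub>M (UNIV::nat set) (\<lambda>_. count_space (UNIV :: 'a set))). \<forall>j. f j = z j}
     \<in> sets (Pi\<^sub>M (UNIV::nat set) (\<lambda>_. count_space (UNIV :: 'a set)))" by measurable
  moreover have "{f \<in> space (Pi\<^sub>M (UNIV::nat set) (\<lambda>_. count_space (UNIV :: 'a set))). \<forall>j. f j = z j} = {z}"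
    by (auto simp: space_PiM fun_eq_iff)
  ultimately show ?thesis by simp
qed

lemma coupling:
  fixes \<phi> :: "nat \<Rightarrow> real"
  assumes pos: "\<forall>i\<ge>1. 0 < \<phi> i" and incr: "mono_on {1..} \<phi>"
    and x: "l1N X0" "1 \<le> npart X0" and y: "l1N Y0" "npart Y0 = npart X0" and d: "Dom Y0 X0"
  shows "mdc_coupling (Kphi \<phi>) X0 Y0 (\<lambda>X Y. (\<forall>i\<ge>1. Tsub i X \<le> Tsub i Y) \<and> Tabs X \<le> Tabs Y)"
proof -
  define n where "n = npart X0"
  have xn: "npart X0 = n" and yn: "npart Y0 = n" using y(2) n_def by auto
  define F where "F \<omega> = (jhmap (Kphi \<phi>) n X0 \<omega>, jhmap (Kphi \<phi>) n Y0 \<omega>)" for \<omega>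
  define N where "N = jhspace \<Otimes>\<^sub>M jhspace"
  have F: "F \<in> Om n \<rightarrow>\<^sub>M N" unfolding F_def N_def by (intro measurable_Pair jhmap_meas)
  define \<mu> where "\<mu> = distr (Om n) N F"
  have lawX: "mdc_law (Kphi \<phi>) X0 \<mu> (\<lambda>\<omega>. fst (fst \<omega>)) (\<lambda>\<omega>. snd (fst \<omega>))"
    unfolding \<mu>_def by (rule law_distr[OF pos incr x(1) xn F]) (auto simp: N_def F_def)
  have lawY: "mdc_law (Kphi \<phi>) Y0 \<mu> (\<lambda>\<omega>. fst (snd \<omega>)) (\<lambda>\<omega>. snd (snd \<omega>))"
    unfolding \<mu>_def by (rule law_distr[OF pos incr y(1) yn F]) (auto simp: N_def F_def)
  define D where "D = (\<lambda>l. (chain n X0 (lr l), chain n Y0 (lr l))) ` (UNIV :: nat list set)"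
  define P where "P \<omega> = ((fst (fst \<omega>), fst (snd \<omega>)) \<in> D \<and> (\<forall>j<n - 1. snd (fst \<omega>) j \<le> snd (snd \<omega>) j))"
    for \<omega> :: "jh \<times> jh"
  have mZ1: "(\<lambda>\<omega>::jh\<times>jh. fst (fst \<omega>)) \<in> N \<rightarrow>\<^sub>M Pi\<^sub>M UNIV (\<lambda>_. count_space UNIV)"
    unfolding N_def jhspace_def by (rule measurable_compose[OF measurable_fst measurable_fst])
  have mZ2: "(\<lambda>\<omega>::jh\<times>jh. fst (snd \<omega>)) \<in> N \<rightarrow>\<^sub>M Pi\<^sub>M UNIV (\<lambda>_. count_space UNIV)"
    unfolding N_def jhspace_def by (rule measurable_compose[OF measurable_snd measurable_fst])
  have mH1[measurable]: "(\<lambda>\<omega>::jh\<times>jh. snd (fst \<omega>) j) \<in> borel_measurable N" for j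
    unfolding N_def by (rule measurable_compose[OF measurable_fst jh_H])
  have mH2[measurable]: "(\<lambda>\<omega>::jh\<times>jh. snd (snd \<omega>) j) \<in> borel_measurable N" for j
    unfolding N_def by (rule measurable_compose[OF measurable_snd jh_H])
  have cD: "countable D" unfolding D_def by simp
  have Pset: "{\<omega>\<in>space N. P \<omega>} \<in> sets N"
  proof -
    have "{\<omega>\<in>space N. P \<omega>} = (\<Union>dd\<in>D. ((\<lambda>\<omega>. fst (fst \<omega>)) -` {fst dd} \<inter> space N) \<inter> ((\<lambda>\<omega>. fst (snd \<omega>)) -` {snd dd} \<inter> space N))
        \<inter> {\<omega>\<in>space N. \<forall>j<n - 1. snd (fst \<omega>) j \<le> snd (snd \<omega>) j}"
      unfolding P_def by force
    moreover have "(\<Union>dd\<in>D. ((\<lambda>\<omega>. fst (fst \<omega>)) -` {fst dd} \<inter> space N) \<inter> ((\<lambda>\<omega>. fst (snd \<omega>)) -` {snd dd} \<inter> space N)) \<in> sets N"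
      by (rule sets.countable_UN''[OF cD]) (intro sets.Int measurable_sets[OF mZ1 sing_meas] measurable_sets[OF mZ2 sing_meas])
    moreover have "{\<omega>\<in>space N. \<forall>j<n - 1. snd (fst \<omega>) j \<le> snd (snd \<omega>) j} \<in> sets N" by measurable
    ultimately show ?thesis by simp
  qed
  have AEP: "AE \<omega> in \<mu>. P \<omega>"
    unfolding \<mu>_def
  proof (subst AE_distr_iff[OF F Pset], rule AE_I2)
    fix \<omega> :: "nat \<Rightarrow> nat \<times> real"
    define l where "l = map (\<lambda>j. fst (\<omega> j)) [0..<n]"
    have tr: "\<forall>j<n. fst (\<omega> j) = lr l j" unfolding l_def lr_def by simp
    have "(chain n X0 (\<lambda>j. fst (\<omega> j)), chain n Y0 (\<lambda>j. fst (\<omega> j))) \<in> D"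
      unfolding D_def using chain_trunc[OF tr] by (auto intro!: image_eqI[of _ _ l])
    moreover have "\<forall>j<n - 1. hh (Kphi \<phi>) n X0 \<omega> j \<le> hh (Kphi \<phi>) n Y0 \<omega> j"
      using hh_le[OF pos incr x(1) xn y(1) yn d] by blast
    ultimately show "P (F \<omega>)" unfolding P_def F_def jhmap_def by simp
  qed
  have n1: "1 \<le> n" using x(2) n_def by simp
  have R: "AE \<omega> in \<mu>. (\<lambda>X Y. (\<forall>i\<ge>1. Tsub i X \<le> Tsub i Y) \<and> Tabs X \<le> Tabs Y)
              (cpath (npart X0) (fst \<omega>)) (cpath (npart Y0) (snd \<omega>))"
    using AEP
  proof (rule eventually_mono)
    fix \<omega> :: "jh \<times> jh" assume "P \<omega>"
    then obtain l where l: "fst (fst \<omega>) = chain n X0 (lr l)" "fst (snd \<omega>) = chain n Y0 (lr l)"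
      and h: "\<forall>j<n - 1. snd (fst \<omega>) j \<le> snd (snd \<omega>) j" unfolding P_def D_def by auto
    obtain hX hY where e: "fst \<omega> = (chain n X0 (lr l), hX)" "snd \<omega> = (chain n Y0 (lr l), hY)"
      using l by (metis prod.collapse)
    have h': "\<forall>j<n - 1. hX j \<le> hY j" using h e by simp
    show "(\<lambda>X Y. (\<forall>i\<ge>1. Tsub i X \<le> Tsub i Y) \<and> Tabs X \<le> Tabs Y)
              (cpath (npart X0) (fst \<omega>)) (cpath (npart Y0) (snd \<omega>))"
      unfolding xn yn e by (rule path_rel[OF x(1) xn y(1) yn d n1 h'])
  qed
  show ?thesis unfolding mdc_coupling_def
    by (rule exI[of _ \<mu>]) (use lawX lawY R in \<open>simp add: \<mu>_def N_def\<close>)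
qed

lemma coupling_mono: "mdc_coupling K X0 Y0 R \<Longrightarrow> (\<And>X Y. R X Y \<Longrightarrow> R' X Y) \<Longrightarrow> mdc_coupling K X0 Y0 R'"
  unfolding mdc_coupling_def by (auto elim!: eventually_mono)

lemma nonzero_npart: "l1N X \<Longrightarrow> X \<noteq> (\<lambda>_. 0) \<Longrightarrow> 1 \<le> npart X"
proof -
  assume a: "l1N X" "X \<noteq> (\<lambda>_. 0)"
  then obtain i where "X i \<noteq> 0" by auto
  then show ?thesis using npart_pos[OF a(1), of i] by simp
qed

theorem lemma5p1:
  fixes \<phi> :: "nat \<Rightarrow> real"
  assumes pos: "\<forall>i\<ge>1. 0 < \<phi> i"
    and incr: "mono_on {1..} \<phi>"
  shows "(\<forall>X0 Y0. l1N X0 \<and> l1N Y0 \<and> X0 \<noteq> (\<lambda>_. 0) \<and> Y0 \<noteq> (\<lambda>_. 0)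
              \<and> npart X0 = npart Y0 \<and> (\<forall>m\<in>{1..npart X0}. S m Y0 \<le> S m X0)
           \<longrightarrow> mdc_coupling (Kphi \<phi>) X0 Y0
                 (\<lambda>X Y. (\<forall>i\<ge>1. Tsub i X \<le> Tsub i Y) \<and> Tabs X \<le> Tabs Y))
       \<and> (\<forall>X0. l1N X0 \<and> X0 \<noteq> (\<lambda>_. 0)
           \<longrightarrow> mdc_coupling (Kphi \<phi>) X0 (\<lambda>k. npart X0 * unitseq 1 k)
                 (\<lambda>X Y. Tsub 1 X \<le> Tsub 1 Y \<and> Tabs X \<le> Tabs Y))"
proof (intro conjI allI impI)
  fix X0 Y0 :: state
  assume h: "l1N X0 \<and> l1N Y0 \<and> X0 \<noteq> (\<lambda>_. 0) \<and> Y0 \<noteq> (\<lambda>_. 0)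
              \<and> npart X0 = npart Y0 \<and> (\<forall>m\<in>{1..npart X0}. S m Y0 \<le> S m X0)"
  have n1: "1 \<le> npart X0" using nonzero_npart h by blast
  have d: "Dom Y0 X0" using Sdom_Dom h by blast
  show "mdc_coupling (Kphi \<phi>) X0 Y0 (\<lambda>X Y. (\<forall>i\<ge>1. Tsub i X \<le> Tsub i Y) \<and> Tabs X \<le> Tabs Y)"
    using coupling[OF pos incr _ n1 _ _ d] h by simp
next
  fix X0 :: state
  assume h: "l1N X0 \<and> X0 \<noteq> (\<lambda>_. 0)"
  then have x: "l1N X0" by simp
  define n where "n = npart X0"
  have n1: "1 \<le> n" using nonzero_npart h n_def by blast
  define Y0 where "Y0 = (\<lambda>k. npart X0 * unitseq 1 k)"
  have Y: "Y0 k = (if k = 1 then n else 0)" for k unfolding Y0_def n_def unitseq_def by simp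
  have sY: "{i. 0 < Y0 i} = {1}" using n1 Y by auto
  have y: "l1N Y0" unfolding l1N_def using sY Y by simp
  have yn: "npart Y0 = n" unfolding npart_def sY using Y by simp
  have FY: "Fc Y0 c = (if 1 \<le> c then n else 0)" for c
  proof -
    have "Fc Y0 c = (\<Sum>u\<in>{..c}. if u = 1 then n else 0)" unfolding Fc_def using Y by simp
    then show ?thesis by (simp add: sum.delta)
  qed
  have dom: "\<forall>m\<in>{1..npart X0}. S m Y0 \<le> S m X0"
  proof
    fix m assume m: "m \<in> {1..npart X0}"
    then have m1: "1 \<le> m" "m \<le> npart X0" by auto
    have "\<not> S m X0 \<le> 0" using S_le[OF x m1, of 0] Fc_0[OF x] m1 by simp
    then have "1 \<le> S m X0" by simp
    then show "S m Y0 \<le> S m X0" using S_le[OF y m1(1), of "S m X0"] FY m1 yn n_def by simp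
  qed
  have d: "Dom Y0 X0" using Sdom_Dom[OF x y] yn n_def dom by simp
  have "mdc_coupling (Kphi \<phi>) X0 Y0 (\<lambda>X Y. (\<forall>i\<ge>1. Tsub i X \<le> Tsub i Y) \<and> Tabs X \<le> Tabs Y)"
    using coupling[OF pos incr x _ y _ d] n1 yn n_def by simp
  then show "mdc_coupling (Kphi \<phi>) X0 (\<lambda>k. npart X0 * unitseq 1 k) (\<lambda>X Y. Tsub 1 X \<le> Tsub 1 Y \<and> Tabs X \<le> Tabs Y)"
    unfolding Y0_def by (rule coupling_mono) auto
qed


end
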